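(* Let $k\in\mathbb C\setminus\mathbb Q$, $n,m\in\mathbb Z_{>0}$, with $\mathcal E$-equivalence taken at $p_0=n+k^{-1}m$. Let $E\subset\mathcal P_{n,m}$ be an $\mathcal E$-equivalence class, let $x\in\pi(n,m)$, and suppose there is $\alpha\in E$ with $S_x(\alpha)\neq\emptyset$. Then there exists a unique $\mathcal E$-equivalence class $E_x$, different from $E$, such that $X(\alpha)\cap E_x=S_x(\alpha)$ for every $\alpha\in E$.
   Context: Partitions are Young diagrams (finite sets of boxes $(i,j)\in\mathbb Z^2_{>0}$, $i$ = row, $j$ = column, closed under moving up or left); a bipartition is a pair of partitions, operations componentwise. For a box $x=(i,j)$, $c(x,a)=(j-1)+k(i-1)+a$; for $\alpha=(\lambda,\mu)$, $b_r(\alpha,k,p_0)=\sum_{x\in\lambda}c(x,0)^{r-1}+(-1)^r\sum_{y\in\mu}c(y,1+k-kp_0)^{r-1}$; bipartitions are $\mathcal E$-equivalent if all $b_r$, $r\ge1$, coincide. $\pi(n,m)=\{(i,j):1\le i\le n,1\le j\le m\}$, $\theta(i,j)=(n-i+1,m-j+1)$, $\mathcal P_{n,m}$ = bipartitions $(\lambda,\mu)$ with $\lambda,\mu\subset\pi(n,m)$. For $\alpha=(\lambda,\mu)\in\mathcal P_{n,m}$ and $x\in\pi(n,m)$, $S_x(\alpha)$ is the set consisting of $(\lambda\cup x,\mu)$, included only if $x\notin\lambda$ and $\lambda\cup x$ is a Young diagram, and of $(\lambda,\mu\setminus\theta(x))$, included only if $\theta(x)\in\mu$ and $\mu\setminus\theta(x)$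 is a Young diagram. $X(\alpha)$ is the set of all bipartitions $\beta=(\tilde\lambda,\tilde\mu)$ such that $\alpha$ is obtained from $\beta$ either by deleting one box from $\tilde\lambda$ or by adding one box to $\tilde\mu$. *)

theory Defs
  imports Complex_Main
begin

type_synonym box = "nat \<times> nat"   (* (i, j): i = row, j = column, both \<ge> 1 *)
type_synonym bipart = "box set \<times> box set"

definition young :: "box set \<Rightarrow> bool" where
  "young lam \<longleftrightarrow> finite lam \<and> (\<forall>(i,j)\<in>lam. 1 \<le> i \<and> 1 \<le> j) \<and>
     (\<forall>i j i' j'. (i,j) \<in> lam \<and> 1 \<le> i' \<and> i' \<le> i \<and> 1 \<le> j' \<and> j' \<le> j \<longrightarrow> (i',j') \<in> lam)"

definition bipartition :: "bipart \<Rightarrow> bool" where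
  "bipartition \<alpha> \<longleftrightarrow> young (fst \<alpha>) \<and> young (snd \<alpha>)"

definition cc :: "complex \<Rightarrow> box \<Rightarrow> complex \<Rightarrow> complex" where
  "cc k x a = of_nat (snd x - 1) + k * of_nat (fst x - 1) + a"

definition bb :: "nat \<Rightarrow> bipart \<Rightarrow> complex \<Rightarrow> complex \<Rightarrow> complex" where
  "bb r \<alpha> k p0 = (\<Sum>x\<in>fst \<alpha>. cc k x 0 ^ (r - 1))
      + (-1) ^ r * (\<Sum>y\<in>snd \<alpha>. cc k y (1 + k - k * p0) ^ (r - 1))"

definition Eequiv :: "complex \<Rightarrow> complex \<Rightarrow> bipart \<Rightarrow> bipart \<Rightarrow> bool" where
  "Eequiv k p0 \<alpha> \<beta> \<longleftrightarrow> (\<forall>r\<ge>1. bb r \<alpha> k p0 = bb r \<beta> k p0)"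

definition rect :: "nat \<Rightarrow> nat \<Rightarrow> box set" where
  "rect n m = {(i,j). 1 \<le> i \<and> i \<le> n \<and> 1 \<le> j \<and> j \<le> m}"

definition theta :: "nat \<Rightarrow> nat \<Rightarrow> box \<Rightarrow> box" where
  "theta n m x = (n - fst x + 1, m - snd x + 1)"

definition Pnm :: "nat \<Rightarrow> nat \<Rightarrow> bipart set" where
  "Pnm n m = {\<alpha>. bipartition \<alpha> \<and> fst \<alpha> \<subseteq> rect n m \<and> snd \<alpha> \<subseteq> rect n m}"

definition Eclasses :: "complex \<Rightarrow> complex \<Rightarrow> nat \<Rightarrow> nat \<Rightarrow> bipart set set" where
  "Eclasses k p0 n m = {{\<beta> \<in> Pnm n m. Eequiv k p0 \<alpha> \<beta>} | \<alpha>. \<alpha> \<in> Pnm n m}"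

definition Sx :: "nat \<Rightarrow> nat \<Rightarrow> box \<Rightarrow> bipart \<Rightarrow> bipart set" where
  "Sx n m x \<alpha> =
     {(fst \<alpha> \<union> {x}, snd \<alpha>) | _::unit. x \<notin> fst \<alpha> \<and> young (fst \<alpha> \<union> {x})}
   \<union> {(fst \<alpha>, snd \<alpha> - {theta n m x}) | _::unit.
        theta n m x \<in> snd \<alpha> \<and> young (snd \<alpha> - {theta n m x})}"

definition Xset :: "bipart \<Rightarrow> bipart set" where
  "Xset \<alpha> = {\<beta>. bipartition \<beta> \<and>
     ((\<exists>b\<in>fst \<beta>. fst \<alpha> = fst \<beta> - {b} \<and> snd \<alpha> = snd \<beta>) \<or>
      (\<exists>b. b \<notin> snd \<beta> \<and> snd \<alpha> = snd \<beta> \<union> {b} \<and> fst \<alpha> = fst \<beta>))}"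

end

theory Submission
  imports Defs
begin

lemma Sx_iff:
  "\<gamma> \<in> Sx n m x \<alpha> \<longleftrightarrow>
    (\<gamma> = (fst \<alpha> \<union> {x}, snd \<alpha>) \<and> x \<notin> fst \<alpha> \<and> young (fst \<alpha> \<union> {x})) \<or>
    (\<gamma> = (fst \<alpha>, snd \<alpha> - {theta n m x}) \<and> theta n m x \<in> snd \<alpha> \<and> young (snd \<alpha> - {theta n m x}))"
  unfolding Sx_def by auto

lemma bb_add:
  assumes "x \<notin> fst \<alpha>" "finite (fst \<alpha>)"
  shows "bb r (fst \<alpha> \<union> {x}, snd \<alpha>) k p0 = bb r \<alpha> k p0 + cc k x 0 ^ (r-1)"
  using assms unfolding bb_def by (simp add: algebra_simps)

lemma cc_theta:
  assumes "y \<in> rect n m" "k \<noteq> 0"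
  shows "cc k y (1 + k - k * (of_nat n + of_nat m / k)) = - cc k (theta n m y) 0"
proof -
  obtain i j where y: "y = (i,j)" "1 \<le> i" "i \<le> n" "1 \<le> j" "j \<le> m"
    using assms(1) unfolding rect_def by auto
  have a: "k * (of_nat n + of_nat m / k) = k * of_nat n + of_nat m"
    using assms(2) by (simp add: field_simps)
  show ?thesis using y unfolding cc_def theta_def a
    by (simp add: of_nat_diff algebra_simps)
qed

lemma sign_pow:
  assumes "r \<ge> 1"
  shows "(-1) ^ r * ((- c) ^ (r - 1)) = - ((c::complex) ^ (r - 1))"
proof -
  obtain s where rs: "r = Suc s" using assms by (cases r) auto
  have e: "((-1::complex) ^ s) * ((-1) ^ s) = 1"
    by (subst power_mult_distrib[symmetric]) simp
  have "(- c) ^ s = (-1) ^ s * c ^ s" by (rule power_minus)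
  then have "(-1) ^ r * ((- c) ^ (r - 1)) = - (((-1::complex) ^ s * (-1) ^ s) * c ^ s)"
    unfolding rs by simp
  then show ?thesis using e rs by simp
qed

lemma bb_rem:
  assumes "y \<in> snd \<alpha>" "finite (snd \<alpha>)" "y \<in> rect n m" "k \<noteq> 0" "r \<ge> 1"
  shows "bb r (fst \<alpha>, snd \<alpha> - {y}) k (of_nat n + of_nat m / k)
       = bb r \<alpha> k (of_nat n + of_nat m / k) + cc k (theta n m y) 0 ^ (r-1)"
proof -
  let ?a = "1 + k - k * (of_nat n + of_nat m / k)"
  have s: "(\<Sum>z\<in>snd \<alpha>. cc k z ?a ^ (r - 1)) = cc k y ?a ^ (r-1) + (\<Sum>z\<in>snd \<alpha> - {y}. cc k z ?a ^ (r - 1))"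
    using assms(1,2) by (simp add: sum.remove)
  have "(-1) ^ r * (cc k y ?a ^ (r-1)) = - (cc k (theta n m y) 0 ^ (r-1))"
    using cc_theta[OF assms(3,4)] sign_pow[OF assms(5)] by simp
  then show ?thesis unfolding bb_def using s by (simp add: algebra_simps)
qed

lemma cc_inj:
  assumes "k \<notin> \<rat>" "x \<in> rect n m" "y \<in> rect n m" "cc k x 0 = cc k y 0"
  shows "x = y"
proof -
  obtain i j where x: "x = (i,j)" "1 \<le> i" "1 \<le> j"
    using assms(2) unfolding rect_def by auto
  obtain i' j' where y: "y = (i',j')" "1 \<le> i'" "1 \<le> j'"
    using assms(3) unfolding rect_def by auto
  have e: "of_int (int j - int j') = k * of_int (int i' - int i)"
    using assms(4) x y unfolding cc_def by (simp add: of_nat_diff algebra_simps)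
  have "i = i'"
  proof (rule ccontr)
    assume "i \<noteq> i'"
    then have "(of_int (int i' - int i) :: complex) \<noteq> 0" by simp
    then have "k = of_int (int j - int j') / of_int (int i' - int i)"
      using e by (simp add: field_simps)
    then have "k \<in> \<rat>" by simp
    then show False using assms(1) by simp
  qed
  then have "(of_int (int j - int j') :: complex) = 0" using e by simp
  then have "j = j'" by simp
  then show ?thesis using x y \<open>i = i'\<close> by simp
qed

lemma theta_rect: "y \<in> rect n m \<Longrightarrow> theta n m y \<in> rect n m"
  unfolding rect_def theta_def by auto

lemma theta_theta: "y \<in> rect n m \<Longrightarrow> theta n m (theta n m y) = y"
  unfolding rect_def theta_def by auto

lemma young_finite: "young A \<Longrightarrow> finite A" unfolding young_def by auto

lemma Sx_props:
  assumes "\<gamma> \<in> Sx n m x \<alpha>" "\<alpha> \<in> Pnm n m" "x \<in> rect n m" "k \<noteq> 0"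
  shows "\<gamma> \<in> Pnm n m" "\<gamma> \<in> Xset \<alpha>"
    "\<And>r. r \<ge> 1 \<Longrightarrow> bb r \<gamma> k (of_nat n + of_nat m / k) = bb r \<alpha> k (of_nat n + of_nat m / k) + cc k x 0 ^ (r-1)"
proof -
  have ya: "young (fst \<alpha>)" "young (snd \<alpha>)" "fst \<alpha> \<subseteq> rect n m" "snd \<alpha> \<subseteq> rect n m"
    using assms(2) unfolding Pnm_def bipartition_def by auto
  from assms(1) consider
    (a) "\<gamma> = (fst \<alpha> \<union> {x}, snd \<alpha>)" "x \<notin> fst \<alpha>" "young (fst \<alpha> \<union> {x})"
  | (b) "\<gamma> = (fst \<alpha>, snd \<alpha> - {theta n m x})" "theta n m x \<in> snd \<alpha>" "young (snd \<alpha> - {theta n m x})"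
    unfolding Sx_iff by blast
  then have "(\<gamma> \<in> Pnm n m \<and> \<gamma> \<in> Xset \<alpha>) \<and> (\<forall>r\<ge>1. bb r \<gamma> k (of_nat n + of_nat m / k) = bb r \<alpha> k (of_nat n + of_nat m / k) + cc k x 0 ^ (r-1))"
  proof cases
    case a
    have "\<gamma> \<in> Pnm n m" using a ya assms(3) unfolding Pnm_def bipartition_def by auto
    moreover have "\<gamma> \<in> Xset \<alpha>" using a ya unfolding Xset_def bipartition_def by auto
    moreover have "\<forall>r\<ge>1. bb r \<gamma> k (of_nat n + of_nat m / k) = bb r \<alpha> k (of_nat n + of_nat m / k) + cc k x 0 ^ (r-1)"
      using a bb_add[of x \<alpha>] young_finite[OF ya(1)] by simp
    ultimately show ?thesis by simp
  next
    case b
    have "\<gamma> \<in> Pnm n m" using b ya unfolding Pnm_def bipartition_def by auto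
    moreover have "\<gamma> \<in> Xset \<alpha>" unfolding Xset_def bipartition_def mem_Collect_eq
      apply (intro conjI disjI2 exI[of _ "theta n m x"]) using b ya by auto
    moreover have "\<forall>r\<ge>1. bb r \<gamma> k (of_nat n + of_nat m / k) = bb r \<alpha> k (of_nat n + of_nat m / k) + cc k x 0 ^ (r-1)"
      using b bb_rem[of "theta n m x" \<alpha> n m k] young_finite[OF ya(2)] ya(4) assms(3,4)
        theta_theta[OF assms(3)] by auto
    ultimately show ?thesis by simp
  qed
  then show "\<gamma> \<in> Pnm n m" "\<gamma> \<in> Xset \<alpha>"
    "\<And>r. r \<ge> 1 \<Longrightarrow> bb r \<gamma> k (of_nat n + of_nat m / k) = bb r \<alpha> k (of_nat n + of_nat m / k) + cc k x 0 ^ (r-1)"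
    by auto
qed

theorem mainTheorem5:
  fixes k :: complex and n m :: nat and E :: "bipart set" and x :: box
  assumes "k \<notin> \<rat>" and "n > 0" and "m > 0"
    and "E \<in> Eclasses k (of_nat n + of_nat m / k) n m"
    and "x \<in> rect n m"
    and "\<exists>\<alpha>\<in>E. Sx n m x \<alpha> \<noteq> {}"
  shows "\<exists>!F. F \<in> Eclasses k (of_nat n + of_nat m / k) n m \<and> F \<noteq> E \<and>
               (\<forall>\<alpha>\<in>E. Xset \<alpha> \<inter> F = Sx n m x \<alpha>)"
proof -
  define p0 where "p0 = (of_nat n + of_nat m / k :: complex)"
  have k0: "k \<noteq> 0" using assms(1) by auto
  obtain \<alpha>1 where a1: "\<alpha>1 \<in> Pnm n m" and E: "E = {\<beta> \<in> Pnm n m. Eequiv k p0 \<alpha>1 \<beta>}"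
    using assms(4) unfolding Eclasses_def p0_def by auto
  obtain \<alpha>0 \<gamma>0 where a0: "\<alpha>0 \<in> E" and g0: "\<gamma>0 \<in> Sx n m x \<alpha>0" using assms(6) by auto
  have a0P: "\<alpha>0 \<in> Pnm n m" using a0 E by auto
  note G0 = Sx_props[OF g0 a0P assms(5) k0, folded p0_def]
  define F0 where "F0 = {\<beta> \<in> Pnm n m. Eequiv k p0 \<gamma>0 \<beta>}"
  have F0c: "F0 \<in> Eclasses k p0 n m" unfolding F0_def Eclasses_def using G0(1) by blast
  have g0F: "\<gamma>0 \<in> F0" using G0(1) unfolding F0_def Eequiv_def by auto
  have bbE: "\<And>\<alpha> r. \<alpha> \<in> E \<Longrightarrow> r \<ge> 1 \<Longrightarrow> bb r \<alpha> k p0 = bb r \<alpha>1 k p0"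
    using E unfolding Eequiv_def by auto
  have F0neq: "F0 \<noteq> E"
  proof
    assume "F0 = E"
    then have "\<gamma>0 \<in> E" using g0F by simp
    then have "bb 1 \<gamma>0 k p0 = bb 1 \<alpha>0 k p0" using bbE[of \<gamma>0 1] bbE[OF a0, of 1] by simp
    then show False using G0(3)[of 1] by simp
  qed
  have propF: "Xset \<alpha> \<inter> F0 = Sx n m x \<alpha>" if aE: "\<alpha> \<in> E" for \<alpha>
  proof
    have aP: "\<alpha> \<in> Pnm n m" using aE E by auto
    have ya: "young (fst \<alpha>)" "young (snd \<alpha>)" "fst \<alpha> \<subseteq> rect n m" "snd \<alpha> \<subseteq> rect n m"
      using aP unfolding Pnm_def bipartition_def by auto
    have key: "\<And>r. r \<ge> 1 \<Longrightarrow> bb r \<gamma>0 k p0 = bb r \<alpha> k p0 + cc k x 0 ^ (r-1)"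
      using G0(3) bbE[OF a0] bbE[OF aE] by simp
    show "Sx n m x \<alpha> \<subseteq> Xset \<alpha> \<inter> F0"
    proof
      fix \<gamma> assume g: "\<gamma> \<in> Sx n m x \<alpha>"
      note G = Sx_props[OF g aP assms(5) k0, folded p0_def]
      show "\<gamma> \<in> Xset \<alpha> \<inter> F0" using G key unfolding F0_def Eequiv_def by auto
    qed
    show "Xset \<alpha> \<inter> F0 \<subseteq> Sx n m x \<alpha>"
    proof
      fix \<beta> assume b: "\<beta> \<in> Xset \<alpha> \<inter> F0"
      have bP: "\<beta> \<in> Pnm n m" and beq: "\<And>r. r \<ge> 1 \<Longrightarrow> bb r \<beta> k p0 = bb r \<alpha> k p0 + cc k x 0 ^ (r-1)"
        using b key unfolding F0_def Eequiv_def by auto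
      have yb: "young (fst \<beta>)" "young (snd \<beta>)" "fst \<beta> \<subseteq> rect n m" "snd \<beta> \<subseteq> rect n m"
        using bP unfolding Pnm_def bipartition_def by auto
      from b consider
        (a) c where "c \<in> fst \<beta>" "fst \<alpha> = fst \<beta> - {c}" "snd \<alpha> = snd \<beta>"
      | (b) c where "c \<notin> snd \<beta>" "snd \<alpha> = snd \<beta> \<union> {c}" "fst \<alpha> = fst \<beta>"
        unfolding Xset_def by blast
      then show "\<beta> \<in> Sx n m x \<alpha>"
      proof cases
        case a
        have bd: "\<beta> = (fst \<alpha> \<union> {c}, snd \<alpha>)" "c \<notin> fst \<alpha>"
          using a by (auto simp: prod_eq_iff)
        have "bb 2 \<beta> k p0 = bb 2 \<alpha> k p0 + cc k c 0"
          using bb_add[OF bd(2) young_finite[OF ya(1)], of 2 k p0] bd(1) by simp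
        then have "cc k c 0 = cc k x 0" using beq[of 2] by simp
        moreover have "c \<in> rect n m" using a yb(3) by auto
        ultimately have "c = x" using cc_inj[OF assms(1) _ assms(5)] by blast
        then show ?thesis unfolding Sx_iff using bd yb(1) by auto
      next
        case b
        have cs: "c \<in> snd \<alpha>" using b by auto
        have cr: "c \<in> rect n m" using cs ya(4) by auto
        have bd: "\<beta> = (fst \<alpha>, snd \<alpha> - {c})"
          using b by (auto simp: prod_eq_iff)
        have "bb 2 \<beta> k p0 = bb 2 \<alpha> k p0 + cc k (theta n m c) 0"
          using bb_rem[OF cs young_finite[OF ya(2)] cr k0, of 2] bd unfolding p0_def by simp
        then have "cc k (theta n m c) 0 = cc k x 0" using beq[of 2] by simp
        then have "theta n m c = x" using cc_inj[OF assms(1) theta_rect[OF cr] assms(5)] by auto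
        then have "c = theta n m x" using theta_theta[OF cr] by auto
        then show ?thesis unfolding Sx_iff using bd yb(2) cs by auto
      qed
    qed
  qed
  show ?thesis unfolding p0_def[symmetric]
  proof (rule ex1I[of _ F0])
    show "F0 \<in> Eclasses k p0 n m \<and> F0 \<noteq> E \<and> (\<forall>\<alpha>\<in>E. Xset \<alpha> \<inter> F0 = Sx n m x \<alpha>)"
      using F0c F0neq propF by auto
  next
    fix F assume F: "F \<in> Eclasses k p0 n m \<and> F \<noteq> E \<and> (\<forall>\<alpha>\<in>E. Xset \<alpha> \<inter> F = Sx n m x \<alpha>)"
    then obtain \<delta> where Fd: "F = {\<beta> \<in> Pnm n m. Eequiv k p0 \<delta> \<beta>}"
      unfolding Eclasses_def by auto
    have "\<gamma>0 \<in> F" using F a0 g0 by blast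
    then have "Eequiv k p0 \<delta> \<gamma>0" using Fd by auto
    then show "F = F0" unfolding Fd F0_def Eequiv_def by auto
  qed
qed

end
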